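(* Let $(T_n)$ be a sequence of tournaments with $|T_n|\to\infty$ such that $c_3=\lim\mathbf{pr}(C_3,T_n)$ and $c_4=\lim\mathbf{pr}(C_4,T_n)$ exist. Then $$c_4\ge \frac{18c_3^2}{1+8c_3}.$$
   Context: For tournaments $T,H$, $\mathbf{pr}(H,T)$ denotes the probability that a uniformly random set of $|H|$ vertices of $T$ spans a subtournament isomorphic to $H$. $C_3$ is the cyclically oriented triangle and $C_4$ is the $4$-vertex tournament (unique up to isomorphism) containing a directed Hamiltonian $4$-cycle. *)

theory Defs
  imports Complex_Main
begin

definition tournament :: "'a set \<Rightarrow> ('a \<Rightarrow> 'a \<Rightarrow> bool) \<Rightarrow> bool" where
  "tournament V E \<longleftrightarrow> finite V \<and> (\<forall>x\<in>V. \<not> E x x) \<and>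
     (\<forall>x\<in>V. \<forall>y\<in>V. x \<noteq> y \<longrightarrow> (E x y \<longleftrightarrow> \<not> E y x))"

definition spans_copy :: "'b set \<Rightarrow> ('b \<Rightarrow> 'b \<Rightarrow> bool) \<Rightarrow> ('a \<Rightarrow> 'a \<Rightarrow> bool) \<Rightarrow> 'a set \<Rightarrow> bool" where
  "spans_copy VH EH E S \<longleftrightarrow>
     (\<exists>f. bij_betw f VH S \<and> (\<forall>x\<in>VH. \<forall>y\<in>VH. EH x y \<longleftrightarrow> E (f x) (f y)))"

definition pr :: "'b set \<Rightarrow> ('b \<Rightarrow> 'b \<Rightarrow> bool) \<Rightarrow> 'a set \<Rightarrow> ('a \<Rightarrow> 'a \<Rightarrow> bool) \<Rightarrow> real" where
  "pr VH EH V E =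
     real (card {S. S \<subseteq> V \<and> card S = card VH \<and> spans_copy VH EH E S})
     / real (card V choose card VH)"

definition C3_V :: "nat set" where "C3_V = {0,1,2}"
definition C3_E :: "nat \<Rightarrow> nat \<Rightarrow> bool" where
  "C3_E x y \<longleftrightarrow> y = (x + 1) mod 3"

definition C4_V :: "nat set" where "C4_V = {0,1,2,3}"
definition C4_E :: "nat \<Rightarrow> nat \<Rightarrow> bool" where
  "C4_E x y \<longleftrightarrow> (x,y) \<in> {(0,1),(1,2),(2,3),(3,0),(0,2),(1,3)}"

end

theory Submission
  imports Defs
begin

lemma choose3: "real (n choose 3) = real n * (real n - 1) * (real n - 2) / 6"
proof (induction n)
  case 0 then show ?case by simp
next
  case (Suc n)
  have "(Suc n choose 3) = (n choose 2) + (n choose 3)"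
    by (simp add: numeral_3_eq_3 numeral_2_eq_2)
  moreover have "real (n choose 2) = real n * (real n - 1) / 2"
  proof (induction n)
    case (Suc m)
    have "(Suc m choose 2) = (m choose 1) + (m choose 2)" by (simp add: numeral_2_eq_2)
    then show ?case using Suc by (simp add: field_simps)
  qed simp
  ultimately show ?case using Suc by (simp add: field_simps)
qed

lemma choose4: "real (n choose 4) = real n * (real n - 1) * (real n - 2) * (real n - 3) / 24"
proof (induction n)
  case 0 then show ?case by simp
next
  case (Suc n)
  have "(Suc n choose 4) = (n choose 3) + (n choose 4)"
    by (simp add: numeral_eq_Suc)
  then show ?case using Suc choose3[of n] by (simp add: field_simps)
qed

declare sum_of_bool_eq[simp del]

lemma tourD:
  assumes "tournament V E"
  shows "finite V" "\<And>x. x\<in>V \<Longrightarrow> \<not> E x x"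
    "\<And>x y. x\<in>V \<Longrightarrow> y\<in>V \<Longrightarrow> E x y \<Longrightarrow> \<not> E y x"
    "\<And>x y. x\<in>V \<Longrightarrow> y\<in>V \<Longrightarrow> x \<noteq> y \<Longrightarrow> \<not> E x y \<Longrightarrow> E y x"
  using assms unfolding tournament_def by metis+

lemma arcs_pair:
  assumes "tournament V E" "x\<in>V" "y\<in>V"
  shows "of_bool (E x y) + of_bool (E y x) = (of_bool (x \<noteq> y) :: real)"
proof (cases "x = y")
  case True then show ?thesis using tourD(2)[OF assms(1) assms(2)] by simp
next
  case False then show ?thesis using tourD(3,4)[OF assms(1) assms(2,3)] tourD(3)[OF assms(1) assms(3,2)]
    by (cases "E x y") simp_all
qed

lemma sum_ne:
  assumes "finite W" "x \<in> W"
  shows "(\<Sum>y\<in>W. (of_bool (x \<noteq> y) :: real)) = real (card W) - 1"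
proof -
  have "(\<Sum>y\<in>W. (of_bool (x \<noteq> y) :: real)) = (\<Sum>y\<in>W. 1 - (if x = y then 1 else 0))"
    by (intro sum.cong) auto
  also have "\<dots> = real (card W) - 1" using assms by (simp add: sum_subtractf)
  finally show ?thesis .
qed

lemma sum_arcs:
  assumes T: "tournament V E" and W: "W \<subseteq> V"
  shows "(\<Sum>x\<in>W. \<Sum>y\<in>W. (of_bool (E x y) :: real)) = real (card W) * (real (card W) - 1) / 2"
proof -
  have fW: "finite W" using tourD(1)[OF T] W finite_subset by blast
  have s: "(\<Sum>x\<in>W. \<Sum>y\<in>W. (of_bool (E y x) :: real)) = (\<Sum>x\<in>W. \<Sum>y\<in>W. of_bool (E x y))"
    by (rule sum.swap)
  have "(\<Sum>x\<in>W. \<Sum>y\<in>W. (of_bool (E x y) :: real)) + (\<Sum>x\<in>W. \<Sum>y\<in>W. of_bool (E y x))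
      = (\<Sum>x\<in>W. \<Sum>y\<in>W. of_bool (E x y) + of_bool (E y x))"
    by (simp add: sum.distrib)
  also have "\<dots> = (\<Sum>x\<in>W. \<Sum>y\<in>W. of_bool (x \<noteq> y))"
    using arcs_pair[OF T] W by (intro sum.cong refl) (meson subsetD)
  also have "\<dots> = (\<Sum>x\<in>W. real (card W) - 1)"
    using sum_ne[OF fW] by (intro sum.cong refl) auto
  also have "\<dots> = real (card W) * (real (card W) - 1)" by simp
  finally have "(\<Sum>x\<in>W. \<Sum>y\<in>W. (of_bool (E x y) :: real)) + (\<Sum>x\<in>W. \<Sum>y\<in>W. of_bool (E y x)) = real (card W) * (real (card W) - 1)" .
  then show ?thesis unfolding s by linarith
qed

lemma swap23: "(\<Sum>a\<in>A. \<Sum>b\<in>B. \<Sum>c\<in>C. f a b c) = (\<Sum>a\<in>A. \<Sum>c\<in>C. \<Sum>b\<in>B. f a b c)"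
  by (rule sum.cong[OF refl], rule sum.swap)

lemma rot3: "(\<Sum>a\<in>A. \<Sum>b\<in>B. \<Sum>c\<in>C. f a b c) = (\<Sum>b\<in>B. \<Sum>c\<in>C. \<Sum>a\<in>A. f a b c)"
proof -
  have "(\<Sum>a\<in>A. \<Sum>b\<in>B. \<Sum>c\<in>C. f a b c) = (\<Sum>b\<in>B. \<Sum>a\<in>A. \<Sum>c\<in>C. f a b c)"
    by (rule sum.swap)
  also have "\<dots> = (\<Sum>b\<in>B. \<Sum>c\<in>C. \<Sum>a\<in>A. f a b c)" by (rule swap23)
  finally show ?thesis .
qed

definition outd :: "'a set \<Rightarrow> ('a \<Rightarrow> 'a \<Rightarrow> bool) \<Rightarrow> 'a \<Rightarrow> real" where
  "outd V E u = (\<Sum>x\<in>V. of_bool (E u x))"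

definition kk :: "'a set \<Rightarrow> ('a \<Rightarrow> 'a \<Rightarrow> bool) \<Rightarrow> 'a \<Rightarrow> 'a \<Rightarrow> real" where
  "kk V E u v = (\<Sum>x\<in>V. of_bool (E v x \<and> E x u))"

lemma kk_expand: "of_bool (E u v) * kk V E u v * f = (\<Sum>x\<in>V. of_bool (E u v \<and> E v x \<and> E x u) * f)"
  unfolding kk_def by (simp add: sum_distrib_left sum_distrib_right mult.assoc)

lemma F3:
  "(\<Sum>u\<in>V. \<Sum>v\<in>V. of_bool (E u v) * kk V E u v * (outd V E v - outd V E u)) = 0"
proof -
  let ?c = "\<lambda>u v x. (of_bool (E u v \<and> E v x \<and> E x u) :: real)"
  have "(\<Sum>u\<in>V. \<Sum>v\<in>V. of_bool (E u v) * kk V E u v * (outd V E v - outd V E u))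
     = (\<Sum>u\<in>V. \<Sum>v\<in>V. \<Sum>x\<in>V. ?c u v x * outd V E v) - (\<Sum>u\<in>V. \<Sum>v\<in>V. \<Sum>x\<in>V. ?c u v x * outd V E u)"
    by (simp add: kk_expand right_diff_distrib sum_subtractf)
  also have "(\<Sum>u\<in>V. \<Sum>v\<in>V. \<Sum>x\<in>V. ?c u v x * outd V E v) = (\<Sum>v\<in>V. \<Sum>x\<in>V. \<Sum>u\<in>V. ?c u v x * outd V E v)"
    by (rule rot3)
  also have "\<dots> = (\<Sum>v\<in>V. \<Sum>x\<in>V. \<Sum>u\<in>V. ?c v x u * outd V E v)"
    by (intro sum.cong refl) (simp add: conj_commute conj_left_commute)
  finally show ?thesis by simp
qed

lemma pt4:
  assumes T: "tournament V E" and "u\<in>V" "x\<in>V" "y\<in>V"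
  shows "of_bool (E u x \<and> E u y) + of_bool (E x u \<and> E x y) + of_bool (E y u \<and> E y x)
     + of_bool (E u x \<and> E x y \<and> E y u) + of_bool (E u y \<and> E y x \<and> E x u)
   = of_bool (u \<noteq> x \<and> u \<noteq> y \<and> x \<noteq> y) + of_bool (x = y \<and> E u x) + of_bool (u = y \<and> E x u)
     + (of_bool (u = x \<and> E y u) :: real)"
proof -
  have i: "\<not> E u u" "\<not> E x x" "\<not> E y y" using tourD(2)[OF T] assms(2-4) by auto
  have p1: "u \<noteq> x \<Longrightarrow> E u x = (\<not> E x u)" using tourD(3,4)[OF T] assms(2-4) by metis
  have p2: "u \<noteq> y \<Longrightarrow> E u y = (\<not> E y u)" using tourD(3,4)[OF T] assms(2-4) by metis
  have p3: "x \<noteq> y \<Longrightarrow> E x y = (\<not> E y x)" using tourD(3,4)[OF T] assms(2-4) by metis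
  show ?thesis
  proof (cases "u = x"; cases "u = y"; cases "x = y")
  qed (use i p1 p2 p3 in \<open>cases "E u x"; cases "E u y"; cases "E x y"; simp\<close>)+
qed

lemma sumsq: "(\<Sum>u\<in>V. \<Sum>x\<in>V. \<Sum>y\<in>V. (of_bool (E u x \<and> E u y) :: real)) = (\<Sum>u\<in>V. outd V E u ^ 2)"
  unfolding outd_def power2_eq_square by (simp add: sum_product of_bool_conj)

lemma delta_sum: "finite V \<Longrightarrow> x \<in> V \<Longrightarrow> (\<Sum>y\<in>V. (of_bool (x = y \<and> P y) :: real)) = of_bool (P x)"
proof -
  assume "finite V" "x \<in> V"
  have "(\<Sum>y\<in>V. (of_bool (x = y \<and> P y) :: real)) = (\<Sum>y\<in>V. if x = y then of_bool (P y) else 0)"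
    by (intro sum.cong) auto
  then show ?thesis using \<open>finite V\<close> \<open>x \<in> V\<close> by simp
qed

lemma delta_sum2: "finite V \<Longrightarrow> x \<in> V \<Longrightarrow> (\<Sum>y\<in>V. (of_bool (x = y \<and> Q) :: real)) = of_bool Q"
  using delta_sum[of V x "\<lambda>_. Q"] by simp

lemma D3:
  assumes fV: "finite V"
  shows "(\<Sum>u\<in>V. \<Sum>x\<in>V. \<Sum>y\<in>V. (of_bool (u \<noteq> x \<and> u \<noteq> y \<and> x \<noteq> y) :: real))
     = real (card V) * (real (card V) - 1) * (real (card V) - 2)"
proof -
  have inner: "(\<Sum>y\<in>V. (of_bool (u \<noteq> x \<and> u \<noteq> y \<and> x \<noteq> y) :: real)) = of_bool (u \<noteq> x) * (real (card V) - 2)"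
    if "u \<in> V" "x \<in> V" for u x
  proof (cases "u = x")
    case False
    have "(\<Sum>y\<in>V. (of_bool (u \<noteq> x \<and> u \<noteq> y \<and> x \<noteq> y) :: real)) = real (card (V \<inter> {y. u \<noteq> y \<and> x \<noteq> y}))"
      using False fV by (simp add: sum_of_bool_eq)
    also have "V \<inter> {y. u \<noteq> y \<and> x \<noteq> y} = V - {u, x}" by auto
    also have "real (card (V - {u,x})) = real (card V) - 2"
    proof -
      have "card {u,x} \<le> card V" using that fV by (intro card_mono) auto
      then have "2 \<le> card V" using False by simp
      moreover have "card (V - {u,x}) = card V - 2" using that False fV by (simp add: card_Diff_subset)
      ultimately show ?thesis by (simp add: of_nat_diff)
    qed
    finally show ?thesis using False by simp
  qed simp
  have "(\<Sum>u\<in>V. \<Sum>x\<in>V. \<Sum>y\<in>V. (of_bool (u \<noteq> x \<and> u \<noteq> y \<and> x \<noteq> y) :: real))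
      = (\<Sum>u\<in>V. \<Sum>x\<in>V. of_bool (u \<noteq> x) * (real (card V) - 2))"
    using inner by (intro sum.cong refl) auto
  also have "\<dots> = (\<Sum>u\<in>V. (real (card V) - 1) * (real (card V) - 2))"
    using sum_ne[OF fV] by (intro sum.cong refl) (simp add: sum_distrib_right[symmetric])
  also have "\<dots> = real (card V) * (real (card V) - 1) * (real (card V) - 2)" by simp
  finally show ?thesis .
qed

definition Nn :: "'a set \<Rightarrow> ('a \<Rightarrow> 'a \<Rightarrow> bool) \<Rightarrow> real" where
  "Nn V E = (\<Sum>u\<in>V. \<Sum>v\<in>V. of_bool (E u v))"
definition K3 :: "'a set \<Rightarrow> ('a \<Rightarrow> 'a \<Rightarrow> bool) \<Rightarrow> real" where
  "K3 V E = (\<Sum>u\<in>V. \<Sum>v\<in>V. \<Sum>x\<in>V. of_bool (E u v \<and> E v x \<and> E x u))"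
definition O2 :: "'a set \<Rightarrow> ('a \<Rightarrow> 'a \<Rightarrow> bool) \<Rightarrow> real" where
  "O2 V E = (\<Sum>u\<in>V. outd V E u ^ 2)"

lemma F4:
  assumes T: "tournament V E"
  shows "3 * O2 V E + 2 * K3 V E = real (card V) * (real (card V) - 1) * (real (card V) - 2) + 3 * Nn V E"
proof -
  have fV: "finite V" using tourD[OF T] by simp
  let ?S = "\<lambda>f. (\<Sum>u\<in>V. \<Sum>x\<in>V. \<Sum>y\<in>V. (f u x y :: real))"
  have "?S (\<lambda>u x y. of_bool (E u x \<and> E u y) + of_bool (E x u \<and> E x y) + of_bool (E y u \<and> E y x)
     + of_bool (E u x \<and> E x y \<and> E y u) + of_bool (E u y \<and> E y x \<and> E x u))
    = ?S (\<lambda>u x y. of_bool (u \<noteq> x \<and> u \<noteq> y \<and> x \<noteq> y) + of_bool (x = y \<and> E u x) + of_bool (u = y \<and> E x u)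
     + (of_bool (u = x \<and> E y u)))"
    using pt4[OF T] by (intro sum.cong refl) auto
  moreover have "?S (\<lambda>u x y. of_bool (E u x \<and> E u y) + of_bool (E x u \<and> E x y) + of_bool (E y u \<and> E y x)
     + of_bool (E u x \<and> E x y \<and> E y u) + of_bool (E u y \<and> E y x \<and> E x u))
    = ?S (\<lambda>u x y. of_bool (E u x \<and> E u y)) + ?S (\<lambda>u x y. of_bool (E x u \<and> E x y))
      + ?S (\<lambda>u x y. of_bool (E y u \<and> E y x)) + ?S (\<lambda>u x y. of_bool (E u x \<and> E x y \<and> E y u))
      + ?S (\<lambda>u x y. of_bool (E u y \<and> E y x \<and> E x u))"
    by (simp add: sum.distrib)
  moreover have "?S (\<lambda>u x y. of_bool (u \<noteq> x \<and> u \<noteq> y \<and> x \<noteq> y) + of_bool (x = y \<and> E u x) + of_bool (u = y \<and> E x u)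
     + (of_bool (u = x \<and> E y u)))
    = ?S (\<lambda>u x y. of_bool (u \<noteq> x \<and> u \<noteq> y \<and> x \<noteq> y)) + ?S (\<lambda>u x y. of_bool (x = y \<and> E u x))
      + ?S (\<lambda>u x y. of_bool (u = y \<and> E x u)) + ?S (\<lambda>u x y. of_bool (u = x \<and> E y u))"
    by (simp add: sum.distrib)
  moreover have "?S (\<lambda>u x y. of_bool (E u x \<and> E u y)) = O2 V E"
    unfolding O2_def by (rule sumsq)
  moreover have "?S (\<lambda>u x y. of_bool (E x u \<and> E x y)) = O2 V E"
    unfolding O2_def sumsq[symmetric] by (rule sum.swap)
  moreover have "?S (\<lambda>u x y. of_bool (E y u \<and> E y x)) = O2 V E"
    unfolding O2_def sumsq[symmetric] by (rule trans[OF rot3 rot3])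
  moreover have "?S (\<lambda>u x y. of_bool (E u x \<and> E x y \<and> E y u)) = K3 V E"
    unfolding K3_def ..
  moreover have "?S (\<lambda>u x y. of_bool (E u y \<and> E y x \<and> E x u)) = K3 V E"
    unfolding K3_def by (rule swap23)
  moreover have "?S (\<lambda>u x y. of_bool (u \<noteq> x \<and> u \<noteq> y \<and> x \<noteq> y)) = real (card V) * (real (card V) - 1) * (real (card V) - 2)"
    by (rule D3[OF fV])
  moreover have "?S (\<lambda>u x y. of_bool (x = y \<and> E u x)) = Nn V E"
    unfolding Nn_def using delta_sum[OF fV] by (intro sum.cong refl) auto
  moreover have "?S (\<lambda>u x y. of_bool (u = y \<and> E x u)) = Nn V E"
  proof -
    have "?S (\<lambda>u x y. of_bool (u = y \<and> E x u)) = (\<Sum>x\<in>V. \<Sum>u\<in>V. \<Sum>y\<in>V. (of_bool (u = y \<and> E x u) :: real))"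
      by (rule sum.swap)
    also have "\<dots> = Nn V E" unfolding Nn_def using delta_sum2[OF fV] by (intro sum.cong refl) simp
    finally show ?thesis .
  qed
  moreover have "?S (\<lambda>u x y. of_bool (u = x \<and> E y u)) = Nn V E"
  proof -
    have "?S (\<lambda>u x y. of_bool (u = x \<and> E y u)) = (\<Sum>u\<in>V. \<Sum>y\<in>V. \<Sum>x\<in>V. (of_bool (u = x \<and> E y u) :: real))"
      by (rule swap23)
    also have "\<dots> = (\<Sum>u\<in>V. \<Sum>y\<in>V. (of_bool (E y u) :: real))" using delta_sum2[OF fV] by (intro sum.cong refl) simp
    also have "\<dots> = Nn V E" unfolding Nn_def by (rule sum.swap)
    finally show ?thesis .
  qed
  ultimately show ?thesis by linarith
qed

lemma sum_outd: "(\<Sum>u\<in>V. outd V E u) = Nn V E"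
  unfolding outd_def Nn_def ..

lemma indeg:
  assumes T: "tournament V E" and v: "v \<in> V"
  shows "(\<Sum>u\<in>V. (of_bool (E u v) :: real)) = real (card V) - 1 - outd V E v"
proof -
  have fV: "finite V" using tourD[OF T] by simp
  have "(\<Sum>u\<in>V. (of_bool (E u v) :: real)) = (\<Sum>u\<in>V. of_bool (v \<noteq> u) - of_bool (E v u))"
    using arcs_pair[OF T v] by (intro sum.cong refl) (auto simp: algebra_simps eq_diff_eq)
  also have "\<dots> = real (card V) - 1 - outd V E v"
    unfolding outd_def by (simp add: sum_subtractf sum_ne[OF fV v])
  finally show ?thesis .
qed

lemma F5a: "(\<Sum>u\<in>V. \<Sum>v\<in>V. of_bool (E u v) * outd V E u) = O2 V E"
  unfolding O2_def power2_eq_square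
  by (simp add: sum_distrib_right[symmetric]) (simp add: outd_def)

lemma F5b:
  assumes T: "tournament V E"
  shows "(\<Sum>u\<in>V. \<Sum>v\<in>V. of_bool (E u v) * outd V E v) = (real (card V) - 1) * Nn V E - O2 V E"
proof -
  have "(\<Sum>u\<in>V. \<Sum>v\<in>V. of_bool (E u v) * outd V E v) = (\<Sum>v\<in>V. \<Sum>u\<in>V. of_bool (E u v) * outd V E v)"
    by (rule sum.swap)
  also have "\<dots> = (\<Sum>v\<in>V. (real (card V) - 1 - outd V E v) * outd V E v)"
    using indeg[OF T] by (intro sum.cong refl) (simp add: sum_distrib_right[symmetric])
  also have "\<dots> = (real (card V) - 1) * Nn V E - O2 V E"
    unfolding O2_def sum_outd[symmetric]
    by (simp add: algebra_simps power2_eq_square sum_subtractf sum_distrib_left sum.distrib)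
  finally show ?thesis .
qed

lemma F6:
  assumes T: "tournament V E"
  shows "(\<Sum>u\<in>V. \<Sum>v\<in>V. of_bool (E u v) * (outd V E v - outd V E u)^2) = real (card V) * O2 V E - (Nn V E)^2"
proof -
  have fV: "finite V" using tourD[OF T] by simp
  let ?o = "outd V E"
  have s: "(\<Sum>u\<in>V. \<Sum>v\<in>V. of_bool (E v u) * (?o v - ?o u)^2) = (\<Sum>u\<in>V. \<Sum>v\<in>V. of_bool (E u v) * (?o v - ?o u)^2)"
    by (subst sum.swap) (simp add: power2_commute)
  have "(\<Sum>u\<in>V. \<Sum>v\<in>V. of_bool (E u v) * (?o v - ?o u)^2) + (\<Sum>u\<in>V. \<Sum>v\<in>V. of_bool (E v u) * (?o v - ?o u)^2)
     = (\<Sum>u\<in>V. \<Sum>v\<in>V. (of_bool (E u v) + of_bool (E v u)) * (?o v - ?o u)^2)"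
    by (simp add: sum.distrib distrib_right)
  also have "\<dots> = (\<Sum>u\<in>V. \<Sum>v\<in>V. (?o v - ?o u)^2)"
    using arcs_pair[OF T] by (intro sum.cong refl) auto
  also have "\<dots> = (\<Sum>u\<in>V. \<Sum>v\<in>V. ?o v ^2 - 2 * ?o u * ?o v + ?o u ^ 2)"
    by (simp add: power2_diff algebra_simps)
  also have "\<dots> = 2 * real (card V) * O2 V E - 2 * (Nn V E)^2"
    unfolding O2_def sum_outd[symmetric]
    by (simp add: sum.distrib sum_subtractf sum_distrib_left[symmetric] sum_distrib_right[symmetric] power2_eq_square)
  finally show ?thesis using s by simp
qed

definition SS :: "'a set \<Rightarrow> ('a \<Rightarrow> 'a \<Rightarrow> bool) \<Rightarrow> real" where
  "SS V E = (\<Sum>u\<in>V. \<Sum>v\<in>V. of_bool (E u v) * kk V E u v ^ 2)"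

lemma sum_ak: "(\<Sum>u\<in>V. \<Sum>v\<in>V. of_bool (E u v) * kk V E u v) = K3 V E"
proof -
  have "of_bool (E u v) * kk V E u v = (\<Sum>x\<in>V. of_bool (E u v \<and> E v x \<and> E x u))" for u v
    using kk_expand[where f=1 and E=E and V=V and u=u and v=v] by simp
  then show ?thesis unfolding K3_def by simp
qed

lemma main_ineq:
  assumes T: "tournament V E"
  shows "0 \<le> (1+l)^2 * SS V E - 2*l*(1+l) * K3 V E
     + l^2 * ((real (card V) * O2 V E - (Nn V E)^2) + 2 * ((real (card V) - 1) * Nn V E - 2 * O2 V E) + Nn V E)
     - 2*t*(1+l) * K3 V E + 2*t*l*(real (card V) * Nn V E - 2 * O2 V E) + t^2 * Nn V E"
proof -
  let ?a = "\<lambda>u v. (of_bool (E u v) :: real)"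
  let ?k = "kk V E"
  let ?d = "\<lambda>u v. outd V E v - outd V E u"
  let ?n = "real (card V)"
  have akd: "(\<Sum>u\<in>V. \<Sum>v\<in>V. ?a u v * ?k u v * ?d u v) = 0" by (rule F3)
  have ad: "(\<Sum>u\<in>V. \<Sum>v\<in>V. ?a u v * ?d u v) = (?n - 1) * Nn V E - 2 * O2 V E"
    using F5a[where V=V and E=E] F5b[OF T]
    by (simp add: right_diff_distrib sum_subtractf)
  have ad2: "(\<Sum>u\<in>V. \<Sum>v\<in>V. ?a u v * (?d u v)^2) = ?n * O2 V E - (Nn V E)^2" by (rule F6[OF T])
  have "0 \<le> (\<Sum>u\<in>V. \<Sum>v\<in>V. ?a u v * ((1+l) * ?k u v - l * (?d u v + 1) - t)^2)"
    by (intro sum_nonneg) auto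
  also have "\<dots> = (\<Sum>u\<in>V. \<Sum>v\<in>V. (1+l)^2 * (?a u v * ?k u v ^ 2) - (2*l*(1+l)) * (?a u v * ?k u v * ?d u v)
       - (2*l*(1+l)) * (?a u v * ?k u v) + l^2 * (?a u v * (?d u v)^2) + (2*l^2) * (?a u v * ?d u v)
       + l^2 * ?a u v - (2*t*(1+l)) * (?a u v * ?k u v) + (2*t*l) * (?a u v * ?d u v) + (2*t*l) * ?a u v + t^2 * ?a u v)"
    by (intro sum.cong refl) (simp add: power2_eq_square algebra_simps)
  also have "\<dots> = (1+l)^2 * SS V E - (2*l*(1+l)) * (\<Sum>u\<in>V. \<Sum>v\<in>V. ?a u v * ?k u v * ?d u v)
      - (2*l*(1+l)) * (\<Sum>u\<in>V. \<Sum>v\<in>V. ?a u v * ?k u v)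
      + l^2 * (\<Sum>u\<in>V. \<Sum>v\<in>V. ?a u v * (?d u v)^2) + (2*l^2) * (\<Sum>u\<in>V. \<Sum>v\<in>V. ?a u v * ?d u v) + l^2 * Nn V E
      - (2*t*(1+l)) * (\<Sum>u\<in>V. \<Sum>v\<in>V. ?a u v * ?k u v) + (2*t*l) * (\<Sum>u\<in>V. \<Sum>v\<in>V. ?a u v * ?d u v)
      + (2*t*l) * Nn V E + t^2 * Nn V E"
    unfolding SS_def Nn_def
    by (simp only: sum.distrib sum_subtractf sum_distrib_left[symmetric])
  also have "\<dots> = (1+l)^2 * SS V E - (2*l*(1+l)) * 0 - (2*l*(1+l)) * K3 V E
      + l^2 * (?n * O2 V E - (Nn V E)^2) + (2*l^2) * ((?n - 1) * Nn V E - 2 * O2 V E) + l^2 * Nn V E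
      - (2*t*(1+l)) * K3 V E + (2*t*l) * ((?n - 1) * Nn V E - 2 * O2 V E) + (2*t*l) * Nn V E + t^2 * Nn V E"
    by (simp only: akd ad ad2 sum_ak)
  finally show ?thesis by (simp add: algebra_simps)
qed

lemma card3sum:
  assumes "finite V"
  shows "real (card (SIGMA u:V. SIGMA v:V. {x\<in>V. P u v x})) = (\<Sum>u\<in>V. \<Sum>v\<in>V. \<Sum>x\<in>V. of_bool (P u v x))"
  using assms by (simp add: card_SigmaI sum_of_bool_eq Int_def conj_commute)

lemma spans3:
  assumes T: "tournament V E" and V: "u\<in>V" "v\<in>V" "x\<in>V" and e: "E u v" "E v x" "E x u"
  shows "spans_copy C3_V C3_E E {u,v,x}"
proof -
  note tD = tourD[OF T]
  have d: "u \<noteq> v" "v \<noteq> x" "x \<noteq> u" using e V tD(2) by metis+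
  have n: "\<not> E v u" "\<not> E x v" "\<not> E u x" using e V tD(3) by metis+
  have nn: "\<not> E u u" "\<not> E v v" "\<not> E x x" using V tD(2) by auto
  define f where "f = (\<lambda>i::nat. if i = 0 then u else if i = 1 then v else x)"
  have "bij_betw f C3_V {u,v,x}"
    unfolding bij_betw_def inj_on_def C3_V_def f_def using d by auto
  moreover have "\<forall>a\<in>C3_V. \<forall>b\<in>C3_V. C3_E a b \<longleftrightarrow> E (f a) (f b)"
    unfolding C3_V_def C3_E_def f_def using e n nn by auto
  ultimately show ?thesis unfolding spans_copy_def by blast
qed

lemma spans3_inv:
  assumes "spans_copy C3_V C3_E E S"
  shows "\<exists>u v x. S = {u,v,x} \<and> E u v \<and> E v x \<and> E x u"
proof -
  obtain f where f: "bij_betw f C3_V S" "\<forall>a\<in>C3_V. \<forall>b\<in>C3_V. C3_E a b \<longleftrightarrow> E (f a) (f b)"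
    using assms unfolding spans_copy_def by blast
  have "S = f ` C3_V" using f(1) by (simp add: bij_betw_def)
  then have "S = {f 0, f 1, f 2}" by (simp add: C3_V_def)
  moreover have "E (f 0) (f 1)" "E (f 1) (f 2)" "E (f 2) (f 0)"
    using f(2) by (auto simp: C3_V_def C3_E_def)
  ultimately show ?thesis by blast
qed

lemma C3count:
  assumes T: "tournament V E"
  shows "3 * real (card {S. S \<subseteq> V \<and> card S = card C3_V \<and> spans_copy C3_V C3_E E S}) = K3 V E"
proof -
  have fV: "finite V" using tourD[OF T] by simp
  note tD = tourD[OF T]
  define Cyc where "Cyc = (SIGMA u:V. SIGMA v:V. {x\<in>V. E u v \<and> E v x \<and> E x u})"
  define g where "g = (\<lambda>(u::'a, v::'a, x::'a). {u,v,x})"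
  define C3s where "C3s = {S. S \<subseteq> V \<and> card S = card C3_V \<and> spans_copy C3_V C3_E E S}"
  have fC: "finite Cyc" unfolding Cyc_def using fV by auto
  have K: "K3 V E = real (card Cyc)" unfolding Cyc_def K3_def by (rule card3sum[OF fV, symmetric])
  have c3v: "card C3_V = 3" by (simp add: C3_V_def)
  have img: "g ` Cyc = C3s"
  proof
    show "g ` Cyc \<subseteq> C3s"
    proof
      fix S assume "S \<in> g ` Cyc"
      then obtain u v x where t: "u\<in>V" "v\<in>V" "x\<in>V" "E u v" "E v x" "E x u" and S: "S = {u,v,x}"
        unfolding Cyc_def g_def by auto
      have "u \<noteq> v" "v \<noteq> x" "x \<noteq> u" using t tD(2) by metis+
      then have c: "card S = 3" using S by simp
      have sp: "spans_copy C3_V C3_E E S" using spans3[OF T t] S by simp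
      have "S \<subseteq> V" using S t by simp
      then show "S \<in> C3s" unfolding C3s_def using sp c c3v by simp
    qed
  next
    show "C3s \<subseteq> g ` Cyc"
    proof
      fix S assume S: "S \<in> C3s"
      then have sp: "spans_copy C3_V C3_E E S" and SV: "S \<subseteq> V" unfolding C3s_def by auto
      obtain u v x where e: "S = {u,v,x}" "E u v" "E v x" "E x u"
        using spans3_inv[OF sp] by blast
      have "u\<in>V" "v\<in>V" "x\<in>V" using SV e(1) by auto
      then have "(u,v,x) \<in> Cyc" unfolding Cyc_def using e by simp
      moreover have "S = g (u,v,x)" unfolding g_def using e by simp
      ultimately show "S \<in> g ` Cyc" by blast
    qed
  qed
  have fib: "card {t \<in> Cyc. g t = S} = 3" if "S \<in> C3s" for S
  proof -
    obtain u v x where t: "u\<in>V" "v\<in>V" "x\<in>V" "E u v" "E v x" "E x u" and S: "S = {u,v,x}"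
      using \<open>S \<in> C3s\<close> img[symmetric] unfolding Cyc_def g_def by auto
    have d: "u \<noteq> v" "v \<noteq> x" "x \<noteq> u" using t tD(2) by metis+
    have n: "\<not> E v u" "\<not> E x v" "\<not> E u x" using t tD(3) by metis+
    have "{t \<in> Cyc. g t = S} = {(u,v,x),(v,x,u),(x,u,v)}"
    proof
      show "{(u,v,x),(v,x,u),(x,u,v)} \<subseteq> {t \<in> Cyc. g t = S}"
        using t S unfolding Cyc_def g_def by auto
      show "{t \<in> Cyc. g t = S} \<subseteq> {(u,v,x),(v,x,u),(x,u,v)}"
      proof
        fix t assume "t \<in> {t \<in> Cyc. g t = S}"
        then obtain a b c where tt: "t = (a,b,c)" "E a b" "E b c" "E c a" "{a,b,c} = {u,v,x}"
          unfolding Cyc_def g_def S by auto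
        have m: "a \<in> {u,v,x}" "b \<in> {u,v,x}" "c \<in> {u,v,x}" using tt(5) by blast+
        have nn: "\<not> E u u" "\<not> E v v" "\<not> E x x" using t tD(2) by auto
        have "(a = u \<and> b = v \<and> c = x) \<or> (a = v \<and> b = x \<and> c = u) \<or> (a = x \<and> b = u \<and> c = v)"
        proof -
          { assume "a = u"
            then have "b = v" using m(2) tt(2) n nn by auto
            then have "c = x" using m(3) tt(3) n nn by auto
            note \<open>a = u\<close> \<open>b = v\<close> this }
          moreover
          { assume "a = v"
            then have "b = x" using m(2) tt(2) n nn by auto
            then have "c = u" using m(3) tt(3) n nn by auto
            note \<open>a = v\<close> \<open>b = x\<close> this }
          moreover
          { assume "a = x"
            then have "b = u" using m(2) tt(2) n nn by auto
            then have "c = v" using m(3) tt(3) n nn by auto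
            note \<open>a = x\<close> \<open>b = u\<close> this }
          ultimately show ?thesis using m(1) by blast
        qed
        then show "t \<in> {(u,v,x),(v,x,u),(x,u,v)}" using tt(1) by auto
      qed
    qed
    then show ?thesis using d by simp
  qed
  have "card Cyc = (\<Sum>S\<in>g ` Cyc. card {t \<in> Cyc. g t = S})"
    using sum.image_gen[OF fC, of "\<lambda>_. (1::nat)" g] by simp
  also have "\<dots> = (\<Sum>S\<in>C3s. 3)" using img fib by simp
  finally show ?thesis using K unfolding C3s_def by simp
qed

definition P4 :: "('a \<Rightarrow> 'a \<Rightarrow> bool) \<Rightarrow> 'a \<Rightarrow> 'a \<Rightarrow> 'a \<Rightarrow> 'a \<Rightarrow> bool" where
  "P4 E u v x y \<longleftrightarrow> E u v \<and> E v x \<and> E x u \<and> E v y \<and> E y u \<and> E x y"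

lemma P4_facts:
  assumes T: "tournament V E" and V: "u\<in>V" "v\<in>V" "x\<in>V" "y\<in>V" and P: "P4 E u v x y"
  shows "E u v" "E v x" "E x u" "E v y" "E y u" "E x y"
    "\<not> E v u" "\<not> E x v" "\<not> E u x" "\<not> E y v" "\<not> E u y" "\<not> E y x"
    "\<not> E u u" "\<not> E v v" "\<not> E x x" "\<not> E y y"
proof -
  note tD = tourD[OF T]
  show e: "E u v" "E v x" "E x u" "E v y" "E y u" "E x y" using P unfolding P4_def by auto
  show "\<not> E v u" using tD(3)[OF V(1,2) e(1)] .
  show "\<not> E x v" using tD(3)[OF V(2,3) e(2)] .
  show "\<not> E u x" using tD(3)[OF V(3,1) e(3)] .
  show "\<not> E y v" using tD(3)[OF V(2,4) e(4)] .
  show "\<not> E u y" using tD(3)[OF V(4,1) e(5)] .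
  show "\<not> E y x" using tD(3)[OF V(3,4) e(6)] .
  show "\<not> E u u" "\<not> E v v" "\<not> E x x" "\<not> E y y" using tD(2) V by auto
qed

lemma spans4:
  assumes T: "tournament V E" and V: "u\<in>V" "v\<in>V" "x\<in>V" "y\<in>V" and P: "P4 E u v x y"
  shows "spans_copy C4_V C4_E E {u,v,x,y}"
proof -
  note F = P4_facts[OF T V P]
  have d: "u \<noteq> v" "u \<noteq> x" "u \<noteq> y" "v \<noteq> x" "v \<noteq> y" "x \<noteq> y" using F by metis+
  define f where "f = (\<lambda>i::nat. if i = 0 then v else if i = 1 then x else if i = 2 then y else u)"
  have "inj_on f C4_V"
    unfolding inj_on_def C4_V_def f_def using d by auto
  moreover have "f ` C4_V = {u,v,x,y}"
    unfolding C4_V_def f_def by auto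
  moreover have "\<forall>a\<in>C4_V. \<forall>b\<in>C4_V. C4_E a b \<longleftrightarrow> E (f a) (f b)"
    unfolding C4_V_def C4_E_def f_def using F by auto
  ultimately show ?thesis unfolding spans_copy_def bij_betw_def by blast
qed

lemma P4_inj:
  assumes T: "tournament V E" and V: "u\<in>V" "v\<in>V" "x\<in>V" "y\<in>V" and P: "P4 E u v x y"
    and V': "u'\<in>V" "v'\<in>V" "x'\<in>V" "y'\<in>V" and P': "P4 E u' v' x' y'"
    and S: "{u,v,x,y} = {u',v',x',y'}"
  shows "u = u' \<and> v = v' \<and> x = x' \<and> y = y'"
proof -
  note F = P4_facts[OF T V P]
  note F' = P4_facts[OF T V' P']
  have m: "u' \<in> {u,v,x,y}" "v' \<in> {u,v,x,y}" "x' \<in> {u,v,x,y}" "y' \<in> {u,v,x,y}" using S by blast+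
  have d': "x' \<noteq> y'" using F' by metis
  have uu: "u' = u"
  proof -
    have "u' \<noteq> v"
    proof
      assume "u' = v"
      then have "x' = u" "y' = u" using m(3,4) F F' by auto
      then show False using d' by simp
    qed
    moreover have "u' \<noteq> x"
    proof
      assume "u' = x"
      then have "x' = v" "y' = v" using m(3,4) F F' by auto
      then show False using d' by simp
    qed
    moreover have "u' \<noteq> y"
    proof
      assume "u' = y"
      then have "x' \<in> {v,x}" "y' \<in> {v,x}" "v' = u" using m(2,3,4) F F' by auto
      then show False using F F' d' by auto
    qed
    ultimately show ?thesis using m(1) by blast
  qed
  then have vv: "v' = v" using m(2) F F' by auto
  have "x' \<in> {x,y}" "y' \<in> {x,y}" using m(3,4) uu vv F F' by auto
  then have "x' = x \<and> y' = y" using F F' d' by auto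
  then show ?thesis using uu vv by simp
qed

lemma card4sum:
  assumes "finite V"
  shows "real (card (SIGMA u:V. SIGMA v:V. SIGMA x:V. {y\<in>V. P u v x y})) = (\<Sum>u\<in>V. \<Sum>v\<in>V. \<Sum>x\<in>V. \<Sum>y\<in>V. of_bool (P u v x y))"
  using assms by (simp add: card_SigmaI sum_of_bool_eq Int_def conj_commute)

lemma restrictW:
  assumes "finite V" "W \<subseteq> V"
  shows "(\<Sum>y\<in>V. f y * (of_bool (y \<in> W) :: real)) = (\<Sum>y\<in>W. f y)"
proof -
  have "(\<Sum>y\<in>V. f y * (of_bool (y \<in> W) :: real)) = sum f (V \<inter> {y. y \<in> W})"
    by (rule sum_mult_of_bool_eq[OF assms(1)])
  also have "V \<inter> {y. y \<in> W} = W" using assms(2) by auto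
  finally show ?thesis .
qed

lemma inner4:
  assumes T: "tournament V E" and u: "u\<in>V" and v: "v\<in>V"
  shows "(\<Sum>x\<in>V. \<Sum>y\<in>V. (of_bool (P4 E u v x y) :: real)) = of_bool (E u v) * (kk V E u v * (kk V E u v - 1) / 2)"
proof -
  have fV: "finite V" using tourD[OF T] by simp
  define W where "W = {x\<in>V. E v x \<and> E x u}"
  have WV: "W \<subseteq> V" unfolding W_def by auto
  have kW: "kk V E u v = real (card W)"
    unfolding kk_def W_def using fV by (simp add: sum_of_bool_eq Int_def conj_commute)
  have "(\<Sum>x\<in>V. \<Sum>y\<in>V. (of_bool (P4 E u v x y) :: real))
     = (\<Sum>x\<in>V. (of_bool (E u v) * (\<Sum>y\<in>V. of_bool (E x y) * of_bool (y \<in> W))) * of_bool (x \<in> W))"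
    unfolding W_def P4_def
    by (intro sum.cong refl) (simp add: sum_distrib_left sum_distrib_right of_bool_conj mult_ac)
  also have "\<dots> = (\<Sum>x\<in>W. of_bool (E u v) * (\<Sum>y\<in>V. of_bool (E x y) * of_bool (y \<in> W)))"
    by (rule restrictW[OF fV WV])
  also have "\<dots> = (\<Sum>x\<in>W. of_bool (E u v) * (\<Sum>y\<in>W. of_bool (E x y)))"
  proof -
    have "(\<Sum>y\<in>V. (of_bool (E x y) :: real) * of_bool (y \<in> W)) = (\<Sum>y\<in>W. of_bool (E x y))" for x
      by (rule restrictW[OF fV WV])
    then show ?thesis by simp
  qed
  also have "\<dots> = of_bool (E u v) * (\<Sum>x\<in>W. \<Sum>y\<in>W. of_bool (E x y))"
    by (simp add: sum_distrib_left)
  also have "\<dots> = of_bool (E u v) * (kk V E u v * (kk V E u v - 1) / 2)"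
    using sum_arcs[OF T WV] kW by simp
  finally show ?thesis .
qed

lemma C4count:
  assumes T: "tournament V E"
  shows "(SS V E - K3 V E) / 2 \<le> real (card {S. S \<subseteq> V \<and> card S = card C4_V \<and> spans_copy C4_V C4_E E S})"
proof -
  have fV: "finite V" using tourD[OF T] by simp
  define Q where "Q = (SIGMA u:V. SIGMA v:V. SIGMA x:V. {y\<in>V. P4 E u v x y})"
  define C4s where "C4s = {S. S \<subseteq> V \<and> card S = card C4_V \<and> spans_copy C4_V C4_E E S}"
  define h where "h = (\<lambda>(u::'a, v::'a, x::'a, y::'a). {u,v,x,y})"
  have "real (card Q) = (\<Sum>u\<in>V. \<Sum>v\<in>V. \<Sum>x\<in>V. \<Sum>y\<in>V. of_bool (P4 E u v x y))"
    unfolding Q_def by (rule card4sum[OF fV])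
  also have "\<dots> = (\<Sum>u\<in>V. \<Sum>v\<in>V. of_bool (E u v) * (kk V E u v * (kk V E u v - 1) / 2))"
    using inner4[OF T] by (intro sum.cong refl) auto
  also have "\<dots> = (\<Sum>u\<in>V. \<Sum>v\<in>V. (of_bool (E u v) * kk V E u v ^ 2) / 2 - (of_bool (E u v) * kk V E u v) / 2)"
    by (intro sum.cong refl) (simp add: power2_eq_square field_simps)
  also have "\<dots> = (SS V E - K3 V E) / 2"
    unfolding SS_def sum_ak[symmetric]
    by (simp add: sum_subtractf sum_divide_distrib diff_divide_distrib)
  finally have cQ: "real (card Q) = (SS V E - K3 V E) / 2" .
  have c4: "card C4_V = 4" by (simp add: C4_V_def)
  have "h ` Q \<subseteq> C4s"
  proof
    fix S assume "S \<in> h ` Q"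
    then obtain u v x y where t: "u\<in>V" "v\<in>V" "x\<in>V" "y\<in>V" "P4 E u v x y" and S: "S = {u,v,x,y}"
      unfolding Q_def h_def by auto
    note F = P4_facts[OF T t]
    have d: "u \<noteq> v" "u \<noteq> x" "u \<noteq> y" "v \<noteq> x" "v \<noteq> y" "x \<noteq> y" using F by metis+
    have "card S = 4" using S d by simp
    moreover have "S \<subseteq> V" using S t by simp
    moreover have "spans_copy C4_V C4_E E S" using spans4[OF T t] S by simp
    ultimately show "S \<in> C4s" unfolding C4s_def using c4 by simp
  qed
  moreover have "inj_on h Q"
  proof (rule inj_onI)
    fix a b assume a: "a \<in> Q" and b: "b \<in> Q" and e: "h a = h b"
    obtain u v x y where A: "a = (u,v,x,y)" "u\<in>V" "v\<in>V" "x\<in>V" "y\<in>V" "P4 E u v x y"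
      using a unfolding Q_def by auto
    obtain u' v' x' y' where B: "b = (u',v',x',y')" "u'\<in>V" "v'\<in>V" "x'\<in>V" "y'\<in>V" "P4 E u' v' x' y'"
      using b unfolding Q_def by auto
    have "{u,v,x,y} = {u',v',x',y'}" using e A(1) B(1) unfolding h_def by simp
    then show "a = b" using P4_inj[OF T A(2-6) B(2-6)] A(1) B(1) by simp
  qed
  moreover have "finite C4s"
  proof (rule finite_subset)
    show "C4s \<subseteq> Pow V" unfolding C4s_def by auto
    show "finite (Pow V)" using fV by simp
  qed
  ultimately have "card Q \<le> card C4s" by (intro card_inj_on_le) auto
  then show ?thesis using cQ unfolding C4s_def by simp
qed

definition kap :: "real \<Rightarrow> real \<Rightarrow> real" where "kap p h = p*(1-h)*(1-2*h)/2"
definition nu :: "real \<Rightarrow> real" where "nu h = (1-h)/2"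
definition om :: "real \<Rightarrow> real \<Rightarrow> real" where "om p h = nu h * h + ((1-h)*(1-2*h) - 2*kap p h)/3"
definition Gam :: "real \<Rightarrow> real \<Rightarrow> real" where
  "Gam p h = (om p h - nu h^2) + 2*((1-h)*nu h*h - 2*om p h*h) + nu h*h^2"
definition Lf :: "real \<Rightarrow> real \<Rightarrow> real \<Rightarrow> real" where "Lf l p h = (1+l)*kap p h - l*(nu h - 2*om p h)"
definition Psi :: "real \<Rightarrow> real \<Rightarrow> real \<Rightarrow> real \<Rightarrow> real" where
  "Psi l \<tau> p h = ((2*l*(1+l)*kap p h*h - l^2*Gam p h + 2*\<tau>*Lf l p h - \<tau>^2*nu h)/(1+l)^2 - kap p h*h)/2"

lemma finite_ineq:
  assumes T: "tournament V E" and n4: "card V \<ge> 4" and l: "l \<ge> 0"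
  shows "pr C4_V C4_E V E * ((1 - 1/real (card V))*(1-2/real (card V))*(1-3/real (card V))/24)
     \<ge> Psi l \<tau> (pr C3_V C3_E V E) (1/real (card V))"
proof -
  define n where "n = real (card V)"
  define h where "h = 1/n"
  define p where "p = pr C3_V C3_E V E"
  define q where "q = pr C4_V C4_E V E"
  have n4': "n \<ge> 4" using n4 unfolding n_def by simp
  have npos: "n > 0" using n4' by simp
  have hn: "h * n = 1" unfolding h_def using npos by simp
  have c3: "card C3_V = 3" by (simp add: C3_V_def)
  have c4: "card C4_V = 4" by (simp add: C4_V_def)
  have ch3: "real (card V choose 3) = n*(n-1)*(n-2)/6" unfolding n_def by (rule choose3)
  have ch4: "real (card V choose 4) = n*(n-1)*(n-2)*(n-3)/24" unfolding n_def by (rule choose4)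
  have ch3p: "n*(n-1)*(n-2)/6 > 0" using n4' by simp
  have ch4p: "n*(n-1)*(n-2)*(n-3)/24 > 0" using n4' by simp
  have K: "K3 V E = p * n*(n-1)*(n-2)/2"
  proof -
    have "p = real (card {S. S \<subseteq> V \<and> card S = card C3_V \<and> spans_copy C3_V C3_E E S}) / (n*(n-1)*(n-2)/6)"
      unfolding p_def pr_def c3 ch3[symmetric] by simp
    then show ?thesis using C3count[OF T] ch3p by (simp add: field_simps)
  qed
  have C4c: "real (card {S. S \<subseteq> V \<and> card S = card C4_V \<and> spans_copy C4_V C4_E E S}) = q * (n*(n-1)*(n-2)*(n-3)/24)"
  proof -
    have "q = real (card {S. S \<subseteq> V \<and> card S = card C4_V \<and> spans_copy C4_V C4_E E S}) / (n*(n-1)*(n-2)*(n-3)/24)"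
      unfolding q_def pr_def c4 ch4[symmetric] by simp
    then show ?thesis using ch4p by (simp add: field_simps)
  qed
  have N: "Nn V E = n*(n-1)/2" unfolding Nn_def n_def by (rule sum_arcs[OF T subset_refl])
  have O: "O2 V E = (n*(n-1)*(n-2) + 3 * Nn V E - 2 * K3 V E)/3" using F4[OF T] unfolding n_def by simp
  have Kn: "K3 V E = kap p h * h * n^4"
    using npos unfolding K kap_def h_def by (simp add: field_simps eval_nat_numeral)
  have Nnn: "Nn V E = nu h * n^2"
    using npos unfolding N nu_def h_def by (simp add: field_simps eval_nat_numeral)
  have On: "O2 V E = om p h * n^3"
    using npos unfolding O N K om_def nu_def kap_def h_def by (simp add: field_simps eval_nat_numeral)
  have Gn: "(n * O2 V E - (Nn V E)^2) + 2 * ((n - 1) * Nn V E - 2 * O2 V E) + Nn V E = Gam p h * n^4"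
    using npos unfolding On Nnn Gam_def h_def by (simp add: field_simps eval_nat_numeral)
  have Ln: "(1+l) * K3 V E - l * (n * Nn V E - 2 * O2 V E) = Lf l p h * n^3"
    using npos unfolding On Nnn Kn Lf_def h_def by (simp add: field_simps eval_nat_numeral)
  define X where "X = 2*l*(1+l)*kap p h*h - l^2*Gam p h + 2*\<tau>*Lf l p h - \<tau>^2*nu h"
  have mi: "0 \<le> (1+l)^2 * SS V E - 2*l*(1+l) * K3 V E
     + l^2 * ((n * O2 V E - (Nn V E)^2) + 2 * ((n - 1) * Nn V E - 2 * O2 V E) + Nn V E)
     - 2*(\<tau>*n)*(1+l) * K3 V E + 2*(\<tau>*n)*l*(n * Nn V E - 2 * O2 V E) + (\<tau>*n)^2 * Nn V E"
    using main_ineq[OF T, of l "\<tau>*n"] unfolding n_def .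
  have "(1+l)^2 * SS V E - 2*l*(1+l) * K3 V E
     + l^2 * ((n * O2 V E - (Nn V E)^2) + 2 * ((n - 1) * Nn V E - 2 * O2 V E) + Nn V E)
     - 2*(\<tau>*n)*(1+l) * K3 V E + 2*(\<tau>*n)*l*(n * Nn V E - 2 * O2 V E) + (\<tau>*n)^2 * Nn V E
     = (1+l)^2 * SS V E - 2*l*(1+l) * K3 V E
     + l^2 * ((n * O2 V E - (Nn V E)^2) + 2 * ((n - 1) * Nn V E - 2 * O2 V E) + Nn V E)
     - 2*\<tau>*n*((1+l) * K3 V E - l * (n * Nn V E - 2 * O2 V E)) + (\<tau>*n)^2 * Nn V E"
    by (simp add: algebra_simps)
  also have "\<dots> = (1+l)^2 * SS V E - n^4 * X"
    unfolding Gn Ln unfolding Kn Nnn X_def by (simp add: algebra_simps eval_nat_numeral)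
  finally have "n^4 * X \<le> (1+l)^2 * SS V E" using mi by simp
  then have SSb: "n^4 * X / (1+l)^2 \<le> SS V E" using l by (simp add: pos_divide_le_eq mult.commute)
  have "q * (n*(n-1)*(n-2)*(n-3)/24) \<ge> (SS V E - K3 V E)/2" using C4c C4count[OF T] by simp
  moreover have "(SS V E - K3 V E)/2 \<ge> n^4 * Psi l \<tau> p h"
  proof -
    have "n^4 * Psi l \<tau> p h = (n^4 * X / (1+l)^2 - K3 V E)/2"
      unfolding Psi_def X_def Kn using l by (simp add: field_simps)
    then show ?thesis using SSb by simp
  qed
  moreover have "q * (n*(n-1)*(n-2)*(n-3)/24) = n^4 * (q * ((1 - h)*(1-2*h)*(1-3*h)/24))"
    using npos unfolding h_def by (simp add: field_simps eval_nat_numeral)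
  ultimately have "n^4 * Psi l \<tau> p h \<le> n^4 * (q * ((1 - h)*(1-2*h)*(1-3*h)/24))"
    by linarith
  then have "Psi l \<tau> p h \<le> q * ((1 - h)*(1-2*h)*(1-3*h)/24)" using npos by simp
  then show ?thesis unfolding q_def p_def h_def n_def by simp
qed

lemma Psi_val:
  assumes c: "c \<ge> 0"
  shows "Psi (6*c/(1+2*c)) (3*c/(1+2*c)) c 0 = 18 * c^2 / (1 + 8*c) / 24"
proof -
  define d where "d = 1 + 2*c"
  have d0: "d > 0" "d \<noteq> 0" using c unfolding d_def by auto
  have e0: "1 + 8*c > 0" using c by simp
  have k: "kap c 0 = c/2" unfolding kap_def by simp
  have nn: "nu 0 = 1/2" unfolding nu_def by simp
  have o: "om c 0 = (1 - c)/3" unfolding om_def nu_def kap_def by simp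
  have g: "Gam c 0 = (1 - 4*c)/12" unfolding Gam_def o nn by (simp add: field_simps power2_eq_square)
  have l1: "1 + 6*c/d = (1 + 8*c)/d" using d0 unfolding d_def by (simp add: field_simps)
  have cd: "c = (d - 1)/2" unfolding d_def by simp
  have lf: "Lf (6*c/d) c 0 = 3*c/(2*d)" unfolding Lf_def k nn o l1 using d0
    by (simp add: field_simps)
  define e where "e = 1 + 8*c"
  have e1: "e > 0" "e \<noteq> 0" using e0 unfolding e_def by auto
  have l1': "1 + 6*c/d = e/d" using l1 unfolding e_def .
  have num: "2*(6*c/d)*(e/d)*(c/2)*0 - (6*c/d)^2*((1 - 4*c)/12) + 2*(3*c/d)*(3*c/(2*d)) - (3*c/d)^2*(1/2)
      = (3/2)*c^2*e/d^2"
    using d0 unfolding e_def by (simp add: field_simps power2_eq_square)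
  have "Psi (6*c/d) (3*c/d) c 0 = ((2*(6*c/d)*(e/d)*(c/2)*0 - (6*c/d)^2*((1 - 4*c)/12) + 2*(3*c/d)*(3*c/(2*d)) - (3*c/d)^2*(1/2))/(e/d)^2 - (c/2)*0)/2"
    unfolding Psi_def lf g nn l1' k by simp
  also have "\<dots> = ((3/2)*c^2*e/d^2/(e/d)^2)/2" unfolding num by simp
  also have "\<dots> = 18 * c^2 / e / 24"
    using d0 e1 by (simp add: field_simps power2_eq_square)
  finally have "Psi (6*c/d) (3*c/d) c 0 = 18 * c^2 / e / 24" .
  then show ?thesis unfolding d_def e_def .
qed

lemma div24: "a/24 \<le> b/24 \<Longrightarrow> a \<le> (b::real)" by simp

theorem lemma2p5:
  fixes V :: "nat \<Rightarrow> nat set" and E :: "nat \<Rightarrow> nat \<Rightarrow> nat \<Rightarrow> bool"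
    and c3 c4 :: real
  assumes tour: "\<And>n. tournament (V n) (E n)"
    and size: "filterlim (\<lambda>n. card (V n)) at_top sequentially"
    and lim3: "(\<lambda>n. pr C3_V C3_E (V n) (E n)) \<longlonglongrightarrow> c3"
    and lim4: "(\<lambda>n. pr C4_V C4_E (V n) (E n)) \<longlonglongrightarrow> c4"
  shows "c4 \<ge> 18 * c3 ^ 2 / (1 + 8 * c3)"
proof -
  define l where "l = 6*c3/(1+2*c3)"
  define \<tau> where "\<tau> = 3*c3/(1+2*c3)"
  define h where "h = (\<lambda>j. 1 / real (card (V j)))"
  have c3nn: "c3 \<ge> 0"
  proof (rule LIMSEQ_le_const[OF lim3])
    show "\<exists>N. \<forall>n\<ge>N. 0 \<le> pr C3_V C3_E (V n) (E n)" unfolding pr_def by simp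
  qed
  have l0: "l \<ge> 0" unfolding l_def using c3nn by simp
  have fr: "filterlim (\<lambda>j. real (card (V j))) at_top sequentially"
    using filterlim_compose[OF filterlim_real_sequentially size] by (simp add: o_def)
  have hlim: "h \<longlonglongrightarrow> 0"
    using tendsto_inverse_0_at_top[OF fr] unfolding h_def by (simp add: inverse_eq_divide)
  have ev4: "eventually (\<lambda>j. card (V j) \<ge> 4) sequentially"
    using size unfolding filterlim_at_top by blast
  have ev: "eventually (\<lambda>j. Psi l \<tau> (pr C3_V C3_E (V j) (E j)) (h j)
      \<le> pr C4_V C4_E (V j) (E j) * ((1 - h j)*(1 - 2 * h j)*(1 - 3 * h j)/24)) sequentially"
    using ev4
  proof eventually_elim
    case (elim j)
    have "1 - 2 * h j = 1 - 2 / real (card (V j))" "1 - 3 * h j = 1 - 3 / real (card (V j))"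
      unfolding h_def by simp_all
    then show ?case using finite_ineq[OF tour elim l0, of \<tau>] unfolding h_def by simp
  qed
  have L1: "(\<lambda>j. pr C4_V C4_E (V j) (E j) * ((1 - h j)*(1 - 2 * h j)*(1 - 3 * h j)/24))
      \<longlonglongrightarrow> c4 * ((1 - 0)*(1 - 2 * 0)*(1 - 3 * 0)/24)"
    by (intro tendsto_intros lim4 hlim) simp_all
  have L2: "(\<lambda>j. Psi l \<tau> (pr C3_V C3_E (V j) (E j)) (h j)) \<longlonglongrightarrow> Psi l \<tau> c3 0"
    unfolding Psi_def Lf_def Gam_def om_def nu_def kap_def
    using l0 by (intro tendsto_intros lim3 hlim) simp_all
  have "Psi l \<tau> c3 0 \<le> c4 * ((1 - 0)*(1 - 2 * 0)*(1 - 3 * 0)/24)"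
    by (rule tendsto_le[OF sequentially_bot L1 L2 ev])
  then have "18 * c3^2 / (1 + 8*c3) / 24 \<le> c4 / 24"
    using Psi_val[OF c3nn] unfolding l_def \<tau>_def by simp
  then show ?thesis by (rule div24)
qed

end
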